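(* In the model described in the context, the expected fidelity of the end-to-end entangled link delivered in a successful round is $$F_{\mathrm{e2e}}=\frac{1+3\,\mathbb E(w_{\mathrm{e2e}})}{4},\qquad \mathbb E(w_{\mathrm{e2e}})=\frac{w_{\mathrm m}^2\,w_{\mathrm b}\,e^{-k t_{\mathrm{msg}}}}{p}\,U_1(k),\qquad k=\frac{2}{t_{\mathrm{coh}}},$$ where $U_1(v):=\mathbb E\big(e^{-vX_{\mathrm{diff}}}\mathbf 1_{Y=1}\big)$ with $X_{\mathrm{diff}}=X_{\max}-X_{\min}$ on $A_1^+\cup A_2^+$ and $X_{\mathrm{diff}}=2X_b-X_1-X_2$ on $A_b^+$. Moreover, for every $v$, $$U_1(v)=2\Big(\mathbb E\big(e^{-v(X_1-X_2)}\mathbf 1_{A_{12}^+}\big)+\mathbb E\big(e^{-v(X_1-X_b)}\mathbf 1_{A_{1b}^+}\big)-\mathbb E\big(e^{-v(X_1-X_2)}\mathbf 1_{A_{12}^+A_{1b}^+}\big)\Big)+\mathbb E\big(e^{-v(2X_b-X_1-X_2)}\mathbf 1_{A_b^+}\big)$$ $$\qquad-\mathbb E\big(e^{-v(X_1-X_b)}\mathbf 1_{A_1^+A_2^+}\big)-2\,\mathbb E\big(e^{-v(X_1-X_2)}\mathbf 1_{A_1^+A_b^+}\big)+\mathbb E\big(\mathbf 1_{A_1^+A_2^+A_b^+}\big).$$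
   Context: Random model: integers $t_{\mathrm m},t_{\mathrm b}\ge1$, $t_{\mathrm{msg}}\ge0$, $t_{\mathrm{cut}}>\max\{t_{\mathrm m},t_{\mathrm b},t_{\mathrm{msg}}\}$; $p_{\mathrm m},p_{\mathrm b}\in(0,1)$; $M_1,M_2,M_b$ independent with $\mathbb P(M_1=j)=\mathbb P(M_2=j)=p_{\mathrm m}(1-p_{\mathrm m})^{j-1}$, $\mathbb P(M_b=j)=p_{\mathrm b}(1-p_{\mathrm b})^{j-1}$, $j\ge1$; $X_1=t_{\mathrm m}M_1$, $X_2=t_{\mathrm m}M_2$, $X_b=t_{\mathrm b}M_b$ are the generation times (within a round) of elementary link 1 (end node–border node, metropolitan network 1), link 2 (end node–border node, metropolitan network 2) and link b (between the two border nodes, backbone); $X_{\max},X_{\min}$ their max and min; $Y=1$ iff $X_{\max}-X_{\min}<t_{\mathrm{cut}}$ (successful round), $p=\mathbb P(Y=1)$. Events: for $i,j\in\{1,2,b\}$, $A_i^+=\{X_{\max}=X_i,\ X_{\max}-X_{\min}<t_{\mathrm{cut}}\}$, $A_{ij}^+=\{X_{\max}=X_i,\ X_{\min}=X_j,\ X_{\max}-X_{\min}<t_{\mathrm{cut}}\}$; juxtaposition denotes intersection. Physical model: every link is a two-qubit Werner state $w|\Phi^+\rangle\langle\Phi^+|+(1-w)\mathbb I_4/4$, $|\Phi^+\rangle=(|00\rangle+|11\rangle)/\sqrt2$, with fidelity $(1+3w)/4$; freshly generated metropolitan links (1 and 2) have Werner parameter $w_{\mathrm m}$ and the fresh backbone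 link has $w_{\mathrm b}$. Each stored qubit undergoes the depolarising channel $\rho\mapsto e^{-t/t_{\mathrm{coh}}}\rho+(1-e^{-t/t_{\mathrm{coh}}})\mathbb I_2/2$ over storage time $t$, so a Werner link both of whose qubits are stored for time $t$ has its parameter multiplied by $e^{-2t/t_{\mathrm{coh}}}$. Each border node performs a noiseless entanglement swap as soon as it holds both adjacent links (swap-as-soon-as-possible), and swapping Werner states with parameters $w,w'$ yields a Werner state with parameter $ww'$. After the final swap the end-to-end link is stored for a further time $t_{\mathrm{msg}}$ (classical notification to the end nodes). $w_{\mathrm{e2e}}$ denotes the Werner parameter of the resulting end-to-end link in a successful round (conditioned on $Y=1$) and $F_{\mathrm{e2e}}$ its expected fidelity. *)

theory Defs
  imports "HOL-Probability.Probability"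
begin

text \<open>Outcome of a round: the triple (M1, M2, Mb) of numbers of attempts.\<close>
type_synonym outcome = "nat \<times> nat \<times> nat"

definition geom1 :: "real \<Rightarrow> nat pmf" where
  "geom1 q = map_pmf Suc (geometric_pmf q)"

definition round_pmf :: "real \<Rightarrow> real \<Rightarrow> outcome pmf" where
  "round_pmf pm pb = pair_pmf (geom1 pm) (pair_pmf (geom1 pm) (geom1 pb))"

datatype lnk = L1 | L2 | Lb

definition Xof :: "nat \<Rightarrow> nat \<Rightarrow> lnk \<Rightarrow> outcome \<Rightarrow> real" where
  "Xof tm tb l \<omega> = (case \<omega> of (m1, m2, mb) \<Rightarrow>
     (case l of L1 \<Rightarrow> real (tm * m1) | L2 \<Rightarrow> real (tm * m2) | Lb \<Rightarrow> real (tb * mb)))"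

definition Xmax :: "nat \<Rightarrow> nat \<Rightarrow> outcome \<Rightarrow> real" where
  "Xmax tm tb \<omega> = max (Xof tm tb L1 \<omega>) (max (Xof tm tb L2 \<omega>) (Xof tm tb Lb \<omega>))"

definition Xmin :: "nat \<Rightarrow> nat \<Rightarrow> outcome \<Rightarrow> real" where
  "Xmin tm tb \<omega> = min (Xof tm tb L1 \<omega>) (min (Xof tm tb L2 \<omega>) (Xof tm tb Lb \<omega>))"

definition succ :: "nat \<Rightarrow> nat \<Rightarrow> nat \<Rightarrow> outcome \<Rightarrow> bool" where
  "succ tm tb tcut \<omega> \<longleftrightarrow> Xmax tm tb \<omega> - Xmin tm tb \<omega> < real tcut"

definition Aplus :: "nat \<Rightarrow> nat \<Rightarrow> nat \<Rightarrow> lnk \<Rightarrow> outcome \<Rightarrow> bool" where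
  "Aplus tm tb tcut i \<omega> \<longleftrightarrow> Xmax tm tb \<omega> = Xof tm tb i \<omega> \<and> succ tm tb tcut \<omega>"

definition Aplus2 :: "nat \<Rightarrow> nat \<Rightarrow> nat \<Rightarrow> lnk \<Rightarrow> lnk \<Rightarrow> outcome \<Rightarrow> bool" where
  "Aplus2 tm tb tcut i j \<omega> \<longleftrightarrow>
     Xmax tm tb \<omega> = Xof tm tb i \<omega> \<and> Xmin tm tb \<omega> = Xof tm tb j \<omega> \<and> succ tm tb tcut \<omega>"

text \<open>X_diff: X_max - X_min on A_1^+ \<union> A_2^+, and 2 Xb - X1 - X2 on A_b^+
  (the two expressions agree on the overlaps).  Outside Y=1 it is irrelevant.\<close>
definition Xdiff :: "nat \<Rightarrow> nat \<Rightarrow> outcome \<Rightarrow> real" where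
  "Xdiff tm tb \<omega> =
     (if Xmax tm tb \<omega> = Xof tm tb L1 \<omega> \<or> Xmax tm tb \<omega> = Xof tm tb L2 \<omega>
      then Xmax tm tb \<omega> - Xmin tm tb \<omega>
      else 2 * Xof tm tb Lb \<omega> - Xof tm tb L1 \<omega> - Xof tm tb L2 \<omega>)"

definition U1 :: "real \<Rightarrow> real \<Rightarrow> nat \<Rightarrow> nat \<Rightarrow> nat \<Rightarrow> real \<Rightarrow> real" where
  "U1 pm pb tm tb tcut v =
     measure_pmf.expectation (round_pmf pm pb)
       (\<lambda>\<omega>. exp (- v * Xdiff tm tb \<omega>) * of_bool (succ tm tb tcut \<omega>))"

definition psucc :: "real \<Rightarrow> real \<Rightarrow> nat \<Rightarrow> nat \<Rightarrow> nat \<Rightarrow> real" where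
  "psucc pm pb tm tb tcut = measure_pmf.prob (round_pmf pm pb) {\<omega>. succ tm tb tcut \<omega>}"

text \<open>Depolarising factor of a single qubit stored for time t.
  A single-qubit depolarising channel applied to one qubit of a Werner state with
  parameter w yields a Werner state with parameter (factor) * w.\<close>
definition depol :: "real \<Rightarrow> real \<Rightarrow> real" where
  "depol tcoh t = exp (- t / tcoh)"

text \<open>Werner parameter of the end-to-end link under swap-as-soon-as-possible.
  Border node 1 swaps at s1 = max X1 Xb, border node 2 at s2 = max X2 Xb,
  the end-to-end link exists at T = max s1 s2 and is then stored for t_msg.
  Storage times of the six qubits:
   link 1, end-node qubit: T + tmsg - X1;   link 1, border-1 qubit: s1 - X1;
   link b, border-1 qubit: s1 - Xb;         link b, border-2 qubit: s2 - Xb;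
   link 2, border-2 qubit: s2 - X2;         link 2, end-node qubit: T + tmsg - X2.
  Swaps multiply the Werner parameters; depolarisation commutes with the
  (noiseless) swaps on Werner states.\<close>
definition w_e2e :: "real \<Rightarrow> real \<Rightarrow> real \<Rightarrow> nat \<Rightarrow> nat \<Rightarrow> nat \<Rightarrow> outcome \<Rightarrow> real" where
  "w_e2e wm wb tcoh tm tb tmsg \<omega> =
     (let X1 = Xof tm tb L1 \<omega>; X2 = Xof tm tb L2 \<omega>; Xb = Xof tm tb Lb \<omega>;
          s1 = max X1 Xb; s2 = max X2 Xb; T = max s1 s2; D = T + real tmsg
      in (wm * depol tcoh (D - X1) * depol tcoh (s1 - X1))
         * (wb * depol tcoh (s1 - Xb) * depol tcoh (s2 - Xb))
         * (wm * depol tcoh (s2 - X2) * depol tcoh (D - X2)))"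

definition Ew_e2e :: "real \<Rightarrow> real \<Rightarrow> real \<Rightarrow> real \<Rightarrow> real \<Rightarrow> nat \<Rightarrow> nat \<Rightarrow> nat \<Rightarrow> nat \<Rightarrow> real" where
  "Ew_e2e pm pb wm wb tcoh tm tb tmsg tcut =
     measure_pmf.expectation (round_pmf pm pb)
       (\<lambda>\<omega>. w_e2e wm wb tcoh tm tb tmsg \<omega> * of_bool (succ tm tb tcut \<omega>))
     / psucc pm pb tm tb tcut"

definition F_e2e :: "real \<Rightarrow> real \<Rightarrow> real \<Rightarrow> real \<Rightarrow> real \<Rightarrow> nat \<Rightarrow> nat \<Rightarrow> nat \<Rightarrow> nat \<Rightarrow> real" where
  "F_e2e pm pb wm wb tcoh tm tb tmsg tcut =
     measure_pmf.expectation (round_pmf pm pb)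
       (\<lambda>\<omega>. (1 + 3 * w_e2e wm wb tcoh tm tb tmsg \<omega>) / 4 * of_bool (succ tm tb tcut \<omega>))
     / psucc pm pb tm tb tcut"

end

theory Submission
  imports Defs
begin


definition sw :: "outcome \<Rightarrow> outcome" where "sw \<omega> = (case \<omega> of (a,b,c) \<Rightarrow> (b,a,c))"

definition Gt where "Gt tm tb tcut v \<omega> =
  exp (- v * (Xof tm tb L1 \<omega> - Xof tm tb L2 \<omega>)) * of_bool (Aplus2 tm tb tcut L1 L2 \<omega>)
 + exp (- v * (Xof tm tb L1 \<omega> - Xof tm tb Lb \<omega>)) * of_bool (Aplus2 tm tb tcut L1 Lb \<omega>)
 - exp (- v * (Xof tm tb L1 \<omega> - Xof tm tb L2 \<omega>)) * of_bool (Aplus2 tm tb tcut L1 L2 \<omega> \<and> Aplus2 tm tb tcut L1 Lb \<omega>)"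

definition Ht where "Ht tm tb tcut v \<omega> =
  exp (- v * (Xof tm tb L1 \<omega> - Xof tm tb L2 \<omega>)) * of_bool (Aplus tm tb tcut L1 \<omega> \<and> Aplus tm tb tcut Lb \<omega>)"

lemma real_pw:
  fixes a b c v T :: real
  defines "M \<equiv> max a (max b c)" and "m \<equiv> min a (min b c)"
  defines "M' \<equiv> max b (max a c)" and "m' \<equiv> min b (min a c)"
  shows "exp (- v * (if M = a \<or> M = b then M - m else 2 * c - a - b)) * of_bool (M - m < T) =
   (exp (- v * (a - b)) * of_bool (M = a \<and> m = b \<and> M - m < T)
    + exp (- v * (a - c)) * of_bool (M = a \<and> m = c \<and> M - m < T)
    - exp (- v * (a - b)) * of_bool ((M = a \<and> m = b \<and> M - m < T) \<and> (M = a \<and> m = c \<and> M - m < T)))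
   + (exp (- v * (b - a)) * of_bool (M' = b \<and> m' = a \<and> M' - m' < T)
    + exp (- v * (b - c)) * of_bool (M' = b \<and> m' = c \<and> M' - m' < T)
    - exp (- v * (b - a)) * of_bool ((M' = b \<and> m' = a \<and> M' - m' < T) \<and> (M' = b \<and> m' = c \<and> M' - m' < T)))
   + exp (- v * (2 * c - a - b)) * of_bool (M = c \<and> M - m < T)
   - exp (- v * (a - c)) * of_bool ((M = a \<and> M - m < T) \<and> (M = b \<and> M - m < T))
   - exp (- v * (a - b)) * of_bool ((M = a \<and> M - m < T) \<and> (M = c \<and> M - m < T))
   - exp (- v * (b - a)) * of_bool ((M' = b \<and> M' - m' < T) \<and> (M' = c \<and> M' - m' < T))
   + of_bool ((M = a \<and> M - m < T) \<and> (M = b \<and> M - m < T) \<and> (M = c \<and> M - m < T))"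
proof -
  have MM: "M' = M" "m' = m" unfolding M_def M'_def m_def m'_def by (simp_all add: max.left_commute min.left_commute)
  have "M - m < T \<Longrightarrow> ?thesis"
    unfolding MM M_def m_def
    by (cases rule: linorder_cases[of a b]; cases rule: linorder_cases[of b c]; cases rule: linorder_cases[of a c]) (simp_all add: max_def min_def)
  moreover have "\<not> M - m < T \<Longrightarrow> ?thesis"
    unfolding MM by simp
  ultimately show ?thesis by blast
qed

lemma pointwise:
  "exp (- v * Xdiff tm tb \<omega>) * of_bool (succ tm tb tcut \<omega>) =
   Gt tm tb tcut v \<omega> + Gt tm tb tcut v (sw \<omega>)
   + exp (- v * (2 * Xof tm tb Lb \<omega> - Xof tm tb L1 \<omega> - Xof tm tb L2 \<omega>)) * of_bool (Aplus tm tb tcut Lb \<omega>)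
   - exp (- v * (Xof tm tb L1 \<omega> - Xof tm tb Lb \<omega>)) * of_bool (Aplus tm tb tcut L1 \<omega> \<and> Aplus tm tb tcut L2 \<omega>)
   - Ht tm tb tcut v \<omega> - Ht tm tb tcut v (sw \<omega>)
   + of_bool (Aplus tm tb tcut L1 \<omega> \<and> Aplus tm tb tcut L2 \<omega> \<and> Aplus tm tb tcut Lb \<omega>)"
proof -
  obtain m1 m2 mb where w: "\<omega> = (m1,m2,mb)" by (cases \<omega>) auto
  define a where "a = real (tm*m1)"
  define b where "b = real (tm*m2)"
  define c where "c = real (tb*mb)"
  have X: "Xof tm tb L1 \<omega> = a" "Xof tm tb L2 \<omega> = b" "Xof tm tb Lb \<omega> = c"
    "Xof tm tb L1 (sw \<omega>) = b" "Xof tm tb L2 (sw \<omega>) = a" "Xof tm tb Lb (sw \<omega>) = c"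
    by (simp_all add: w sw_def Xof_def a_def b_def c_def)
  have XM: "Xmax tm tb \<omega> = max a (max b c)" "Xmin tm tb \<omega> = min a (min b c)"
    "Xmax tm tb (sw \<omega>) = max b (max a c)" "Xmin tm tb (sw \<omega>) = min b (min a c)"
    by (simp_all only: Xmax_def Xmin_def X)
  have MM: "max b (max a c) = max a (max b c)" "min b (min a c) = min a (min b c)"
    by (simp_all add: max.left_commute min.left_commute)
  show ?thesis
    unfolding Gt_def Ht_def Xdiff_def Aplus_def Aplus2_def succ_def XM X
    by (rule real_pw[where a=a and b=b and c=c and v=v and T="real tcut"])
qed


lemma int_bdd:
  fixes f :: "'a \<Rightarrow> real"
  assumes "\<And>x. \<bar>f x\<bar> \<le> B"
  shows "integrable (measure_pmf P) f"
  by (rule measure_pmf.integrable_const_bound[where B=B]) (auto simp: assms)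

lemma exp_bnd:
  fixes v d K :: real
  assumes "b \<Longrightarrow> \<bar>d\<bar> \<le> K"
  shows "\<bar>exp (- v * d) * of_bool b\<bar> \<le> exp (\<bar>v\<bar> * K)"
proof (cases b)
  case True
  have "- v * d \<le> \<bar>v\<bar> * \<bar>d\<bar>" by (metis abs_ge_minus_self abs_minus_cancel abs_mult mult_minus_left)
  also have "\<dots> \<le> \<bar>v\<bar> * K" using assms True by (simp add: mult_left_mono)
  finally show ?thesis using True by simp
qed simp

lemma succ_bnd:
  assumes "succ tm tb tcut \<omega>"
  shows "\<bar>Xof tm tb l \<omega> - Xof tm tb l' \<omega>\<bar> \<le> real tcut"
proof -
  have "Xmin tm tb \<omega> \<le> Xof tm tb l \<omega>" "Xof tm tb l \<omega> \<le> Xmax tm tb \<omega>"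
       "Xmin tm tb \<omega> \<le> Xof tm tb l' \<omega>" "Xof tm tb l' \<omega> \<le> Xmax tm tb \<omega>"
    by (cases l; cases l'; simp add: Xmin_def Xmax_def)+
  then show ?thesis using assms unfolding succ_def by linarith
qed

lemma succ_bnd2:
  assumes "succ tm tb tcut \<omega>"
  shows "\<bar>2 * Xof tm tb Lb \<omega> - Xof tm tb L1 \<omega> - Xof tm tb L2 \<omega>\<bar> \<le> 2 * real tcut"
  using succ_bnd[OF assms, of Lb L1] succ_bnd[OF assms, of Lb L2] by linarith

lemma Xdiff_bnd:
  assumes "succ tm tb tcut \<omega>"
  shows "\<bar>Xdiff tm tb \<omega>\<bar> \<le> 2 * real tcut"
  using succ_bnd2[OF assms] assms unfolding Xdiff_def succ_def
  by (auto simp: Xmax_def Xmin_def)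

lemma sw_sw[simp]: "sw (sw x) = x" by (auto simp: sw_def split: prod.splits)

lemma inj_sw: "inj sw" by (metis injI sw_sw)

lemma round_sw: "map_pmf sw (round_pmf pm pb) = round_pmf pm pb"
proof (rule pmf_eqI)
  fix x
  have "pmf (map_pmf sw (round_pmf pm pb)) (sw (sw x)) = pmf (round_pmf pm pb) (sw x)"
    by (rule pmf_map_inj'[OF inj_sw])
  also have "\<dots> = pmf (round_pmf pm pb) x"
    by (cases x) (auto simp: sw_def round_pmf_def pmf_pair)
  finally show "pmf (map_pmf sw (round_pmf pm pb)) x = pmf (round_pmf pm pb) x" by simp
qed

lemma integral_sw:
  "measure_pmf.expectation (round_pmf pm pb) (\<lambda>x. f (sw x)) = measure_pmf.expectation (round_pmf pm pb) (f :: _ \<Rightarrow> real)"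
  by (metis integral_map_pmf round_sw)

lemma integrable_sw:
  "integrable (measure_pmf (round_pmf pm pb)) (f :: _ \<Rightarrow> real) \<Longrightarrow> integrable (measure_pmf (round_pmf pm pb)) (\<lambda>x. f (sw x))"
  by (metis integrable_map_pmf_eq round_sw)



lemma expo_real:
  fixes a b c t :: real
  shows "(max (max a c) (max b c) + t - a) + (max a c - a) + (max a c - c) + (max b c - c)
        + (max b c - b) + (max (max a c) (max b c) + t - b)
      = 2 * (t + (if max a (max b c) = a \<or> max a (max b c) = b then max a (max b c) - min a (min b c)
                  else 2 * c - a - b))"
  by (cases "a \<le> b"; cases "b \<le> c"; cases "a \<le> c") (simp_all add: max_def min_def)

lemma w_pointwise:
  "w_e2e wm wb tcoh tm tb tmsg \<omega> = wm^2 * wb * exp (- (2/tcoh) * real tmsg) * exp (- (2/tcoh) * Xdiff tm tb \<omega>)"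
proof -
  obtain m1 m2 mb where w: "\<omega> = (m1,m2,mb)" by (cases \<omega>) auto
  define a where "a = real (tm*m1)"
  define b where "b = real (tm*m2)"
  define c where "c = real (tb*mb)"
  define t where "t = real tmsg"
  have X: "Xof tm tb L1 \<omega> = a" "Xof tm tb L2 \<omega> = b" "Xof tm tb Lb \<omega> = c"
    by (simp_all add: w Xof_def a_def b_def c_def)
  have Xd: "Xdiff tm tb \<omega> = (if max a (max b c) = a \<or> max a (max b c) = b then max a (max b c) - min a (min b c)
                  else 2 * c - a - b)"
    by (simp add: Xdiff_def Xmax_def Xmin_def X)
  have e6: "\<And>x1 x2 x3 x4 x5 x6 :: real. exp (- x1 / tcoh) * exp (- x2 / tcoh) * exp (- x3 / tcoh) * exp (- x4 / tcoh) * exp (- x5 / tcoh) * exp (- x6 / tcoh)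
     = exp (- (x1 + x2 + x3 + x4 + x5 + x6) / tcoh)"
  proof -
    fix x1 x2 x3 x4 x5 x6 :: real
    have "- (x1 + x2 + x3 + x4 + x5 + x6) / tcoh = (- x1 / tcoh) + (- x2 / tcoh) + (- x3 / tcoh) + (- x4 / tcoh) + (- x5 / tcoh) + (- x6 / tcoh)"
      by (simp add: diff_divide_distrib)
    then show "exp (- x1 / tcoh) * exp (- x2 / tcoh) * exp (- x3 / tcoh) * exp (- x4 / tcoh) * exp (- x5 / tcoh) * exp (- x6 / tcoh)
     = exp (- (x1 + x2 + x3 + x4 + x5 + x6) / tcoh)" by (simp only: exp_add)
  qed
  have "w_e2e wm wb tcoh tm tb tmsg \<omega> = wm^2 * wb * (exp (- (max (max a c) (max b c) + t - a) / tcoh) * exp (- (max a c - a) / tcoh) * exp (- (max a c - c) / tcoh) * exp (- (max b c - c) / tcoh)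
        * exp (- (max b c - b) / tcoh) * exp (- (max (max a c) (max b c) + t - b) / tcoh))"
    unfolding w_e2e_def Let_def X depol_def t_def
    by (simp add: power2_eq_square ac_simps)
  also have "\<dots> = wm^2 * wb * exp (- ((max (max a c) (max b c) + t - a) + (max a c - a) + (max a c - c) + (max b c - c)
        + (max b c - b) + (max (max a c) (max b c) + t - b)) / tcoh)"
    by (simp only: e6)
  also have "\<dots> = wm^2 * wb * exp (- (2/tcoh) * t) * exp (- (2/tcoh) * Xdiff tm tb \<omega>)"
  proof -
    have "- (2 * (t + Xdiff tm tb \<omega>)) / tcoh = - (2/tcoh) * t + - (2/tcoh) * Xdiff tm tb \<omega>"
      by (cases "tcoh = 0") (simp_all add: field_simps)
    then show ?thesis unfolding expo_real Xd[symmetric] by (simp add: exp_diff exp_minus divide_inverse)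
  qed
  finally show ?thesis by (simp add: t_def)
qed



lemma int_term:
  fixes d :: "outcome \<Rightarrow> real"
  assumes "\<And>\<omega>. E \<omega> \<Longrightarrow> \<bar>d \<omega>\<bar> \<le> K"
  shows "integrable (measure_pmf P) (\<lambda>\<omega>. exp (- v * d \<omega>) * of_bool (E \<omega>))"
  by (rule int_bdd[where B="exp (\<bar>v\<bar> * K)"]) (rule exp_bnd, rule assms)

theorem mainTheorem2:
  fixes tm tb tmsg tcut :: nat and pm pb wm wb tcoh :: real
  assumes "tm \<ge> 1" and "tb \<ge> 1" and "tcut > max tm (max tb tmsg)"
    and "0 < pm" and "pm < 1" and "0 < pb" and "pb < 1" and "tcoh > 0"
  defines "P \<equiv> round_pmf pm pb"
    and "X \<equiv> Xof tm tb"
    and "A \<equiv> Aplus tm tb tcut"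
    and "AA \<equiv> Aplus2 tm tb tcut"
    and "k \<equiv> 2 / tcoh"
  shows "F_e2e pm pb wm wb tcoh tm tb tmsg tcut
           = (1 + 3 * Ew_e2e pm pb wm wb tcoh tm tb tmsg tcut) / 4
       \<and> Ew_e2e pm pb wm wb tcoh tm tb tmsg tcut
           = wm ^ 2 * wb * exp (- k * real tmsg) / psucc pm pb tm tb tcut
             * U1 pm pb tm tb tcut k
       \<and> (\<forall>v::real. U1 pm pb tm tb tcut v =
            2 * ( measure_pmf.expectation P (\<lambda>\<omega>. exp (- v * (X L1 \<omega> - X L2 \<omega>)) * of_bool (AA L1 L2 \<omega>))
                + measure_pmf.expectation P (\<lambda>\<omega>. exp (- v * (X L1 \<omega> - X Lb \<omega>)) * of_bool (AA L1 Lb \<omega>))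
                - measure_pmf.expectation P (\<lambda>\<omega>. exp (- v * (X L1 \<omega> - X L2 \<omega>)) * of_bool (AA L1 L2 \<omega> \<and> AA L1 Lb \<omega>)))
            + measure_pmf.expectation P (\<lambda>\<omega>. exp (- v * (2 * X Lb \<omega> - X L1 \<omega> - X L2 \<omega>)) * of_bool (A Lb \<omega>))
            - measure_pmf.expectation P (\<lambda>\<omega>. exp (- v * (X L1 \<omega> - X Lb \<omega>)) * of_bool (A L1 \<omega> \<and> A L2 \<omega>))
            - 2 * measure_pmf.expectation P (\<lambda>\<omega>. exp (- v * (X L1 \<omega> - X L2 \<omega>)) * of_bool (A L1 \<omega> \<and> A Lb \<omega>))
            + measure_pmf.expectation P (\<lambda>\<omega>. of_bool (A L1 \<omega> \<and> A L2 \<omega> \<and> A Lb \<omega>)))"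
proof -
  define p where "p = psucc pm pb tm tb tcut"
  define f where "f v \<omega> = exp (- v * Xdiff tm tb \<omega>) * of_bool (succ tm tb tcut \<omega>)" for v \<omega>
  have intf: "integrable (measure_pmf P) (f v)" for v
    unfolding f_def by (rule int_term) (rule Xdiff_bnd)
  have U1f: "U1 pm pb tm tb tcut v = measure_pmf.expectation P (f v)" for v
    unfolding U1_def f_def[abs_def] P_def by simp
  have s111: "succ tm tb tcut (1,1,1)"
  proof -
    have "real tm < real tcut" "real tb < real tcut" using assms(3) by auto
    then show ?thesis by (auto simp: succ_def Xmax_def Xmin_def Xof_def max_def min_def)
  qed
  have ppos: "p > 0"
    unfolding p_def psucc_def round_pmf_def
    by (rule measure_pmf_posI[where x="(1,1,1)"])
       (auto simp: set_pair_pmf geom1_def set_pmf_geometric assms s111 s111[simplified])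
  have pint: "measure_pmf.expectation P (\<lambda>\<omega>. of_bool (succ tm tb tcut \<omega>)) = p"
  proof -
    have "(\<lambda>\<omega>. of_bool (succ tm tb tcut \<omega>) :: real) = indicator {\<omega>. succ tm tb tcut \<omega>}"
      by (auto simp: indicator_def)
    then show ?thesis by (simp add: p_def psucc_def P_def)
  qed
  define C where "C = wm ^ 2 * wb * exp (- k * real tmsg)"
  have hw: "w_e2e wm wb tcoh tm tb tmsg \<omega> * of_bool (succ tm tb tcut \<omega>) = C * f k \<omega>" for \<omega>
    by (simp add: w_pointwise C_def f_def k_def)
  have I: "measure_pmf.expectation P (\<lambda>\<omega>. w_e2e wm wb tcoh tm tb tmsg \<omega> * of_bool (succ tm tb tcut \<omega>))
      = C * U1 pm pb tm tb tcut k"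
    by (simp add: hw U1f)
  have E: "Ew_e2e pm pb wm wb tcoh tm tb tmsg tcut = C * U1 pm pb tm tb tcut k / p"
    using I by (simp add: Ew_e2e_def P_def p_def)
  have intw: "integrable (measure_pmf P) (\<lambda>\<omega>. w_e2e wm wb tcoh tm tb tmsg \<omega> * of_bool (succ tm tb tcut \<omega>))"
    by (simp add: hw intf)
  have ints: "integrable (measure_pmf P) (\<lambda>\<omega>. of_bool (succ tm tb tcut \<omega>) :: real)"
    by (rule int_bdd[where B=1]) simp
  have F: "F_e2e pm pb wm wb tcoh tm tb tmsg tcut = (p / 4 + 3 / 4 * (C * U1 pm pb tm tb tcut k)) / p"
  proof -
    have "(\<lambda>\<omega>. (1 + 3 * w_e2e wm wb tcoh tm tb tmsg \<omega>) / 4 * of_bool (succ tm tb tcut \<omega>))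
      = (\<lambda>\<omega>. 1/4 * of_bool (succ tm tb tcut \<omega>) + 3/4 * (w_e2e wm wb tcoh tm tb tmsg \<omega> * of_bool (succ tm tb tcut \<omega>)))"
      by (auto simp: field_simps)
    then have "measure_pmf.expectation P (\<lambda>\<omega>. (1 + 3 * w_e2e wm wb tcoh tm tb tmsg \<omega>) / 4 * of_bool (succ tm tb tcut \<omega>))
       = p / 4 + 3 / 4 * (C * U1 pm pb tm tb tcut k)"
      using intw ints by (simp add: pint I)
    then show ?thesis unfolding F_e2e_def p_def[symmetric] P_def[symmetric] by (simp only:)
  qed
  have part3: "U1 pm pb tm tb tcut v =
            2 * ( measure_pmf.expectation P (\<lambda>\<omega>. exp (- v * (X L1 \<omega> - X L2 \<omega>)) * of_bool (AA L1 L2 \<omega>))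
                + measure_pmf.expectation P (\<lambda>\<omega>. exp (- v * (X L1 \<omega> - X Lb \<omega>)) * of_bool (AA L1 Lb \<omega>))
                - measure_pmf.expectation P (\<lambda>\<omega>. exp (- v * (X L1 \<omega> - X L2 \<omega>)) * of_bool (AA L1 L2 \<omega> \<and> AA L1 Lb \<omega>)))
            + measure_pmf.expectation P (\<lambda>\<omega>. exp (- v * (2 * X Lb \<omega> - X L1 \<omega> - X L2 \<omega>)) * of_bool (A Lb \<omega>))
            - measure_pmf.expectation P (\<lambda>\<omega>. exp (- v * (X L1 \<omega> - X Lb \<omega>)) * of_bool (A L1 \<omega> \<and> A L2 \<omega>))
            - 2 * measure_pmf.expectation P (\<lambda>\<omega>. exp (- v * (X L1 \<omega> - X L2 \<omega>)) * of_bool (A L1 \<omega> \<and> A Lb \<omega>))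
            + measure_pmf.expectation P (\<lambda>\<omega>. of_bool (A L1 \<omega> \<and> A L2 \<omega> \<and> A Lb \<omega>))" for v
  proof -
    note sb = succ_bnd[of tm tb tcut]
    have i1: "integrable (measure_pmf P) (\<lambda>\<omega>. exp (- v * (X L1 \<omega> - X L2 \<omega>)) * of_bool (AA L1 L2 \<omega>))"
      by (rule int_term[where K="real tcut"]) (auto simp: X_def AA_def Aplus2_def sb)
    have i2: "integrable (measure_pmf P) (\<lambda>\<omega>. exp (- v * (X L1 \<omega> - X Lb \<omega>)) * of_bool (AA L1 Lb \<omega>))"
      by (rule int_term[where K="real tcut"]) (auto simp: X_def AA_def Aplus2_def sb)
    have i3: "integrable (measure_pmf P) (\<lambda>\<omega>. exp (- v * (X L1 \<omega> - X L2 \<omega>)) * of_bool (AA L1 L2 \<omega> \<and> AA L1 Lb \<omega>))"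
      by (rule int_term[where K="real tcut"]) (auto simp: X_def AA_def Aplus2_def sb)
    have i4: "integrable (measure_pmf P) (\<lambda>\<omega>. exp (- v * (2 * X Lb \<omega> - X L1 \<omega> - X L2 \<omega>)) * of_bool (A Lb \<omega>))"
      by (rule int_term[where K="2 * real tcut"]) (auto simp: X_def A_def Aplus_def succ_bnd2)
    have i5: "integrable (measure_pmf P) (\<lambda>\<omega>. exp (- v * (X L1 \<omega> - X Lb \<omega>)) * of_bool (A L1 \<omega> \<and> A L2 \<omega>))"
      by (rule int_term[where K="real tcut"]) (auto simp: X_def A_def Aplus_def sb)
    have i6: "integrable (measure_pmf P) (\<lambda>\<omega>. exp (- v * (X L1 \<omega> - X L2 \<omega>)) * of_bool (A L1 \<omega> \<and> A Lb \<omega>))"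
      by (rule int_term[where K="real tcut"]) (auto simp: X_def A_def Aplus_def sb)
    have i7: "integrable (measure_pmf P) (\<lambda>\<omega>. of_bool (A L1 \<omega> \<and> A L2 \<omega> \<and> A Lb \<omega>) :: real)"
      by (rule int_bdd[where B=1]) simp
    have Gt_eq: "Gt tm tb tcut v = (\<lambda>\<omega>. exp (- v * (X L1 \<omega> - X L2 \<omega>)) * of_bool (AA L1 L2 \<omega>)
        + exp (- v * (X L1 \<omega> - X Lb \<omega>)) * of_bool (AA L1 Lb \<omega>)
        - exp (- v * (X L1 \<omega> - X L2 \<omega>)) * of_bool (AA L1 L2 \<omega> \<and> AA L1 Lb \<omega>))"
      by (simp add: Gt_def[abs_def] X_def AA_def)
    have Ht_eq: "Ht tm tb tcut v = (\<lambda>\<omega>. exp (- v * (X L1 \<omega> - X L2 \<omega>)) * of_bool (A L1 \<omega> \<and> A Lb \<omega>))"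
      by (simp add: Ht_def[abs_def] X_def A_def)
    have iG: "integrable (measure_pmf P) (Gt tm tb tcut v)"
      unfolding Gt_eq using i1 i2 i3 by simp
    have iH: "integrable (measure_pmf P) (Ht tm tb tcut v)"
      unfolding Ht_eq using i6 by simp
    have iGs: "integrable (measure_pmf P) (\<lambda>\<omega>. Gt tm tb tcut v (sw \<omega>))"
      using integrable_sw iG unfolding P_def by blast
    have iHs: "integrable (measure_pmf P) (\<lambda>\<omega>. Ht tm tb tcut v (sw \<omega>))"
      using integrable_sw iH unfolding P_def by blast
    have eG: "measure_pmf.expectation P (\<lambda>\<omega>. Gt tm tb tcut v (sw \<omega>)) = measure_pmf.expectation P (Gt tm tb tcut v)"
      unfolding P_def by (rule integral_sw)
    have eH: "measure_pmf.expectation P (\<lambda>\<omega>. Ht tm tb tcut v (sw \<omega>)) = measure_pmf.expectation P (Ht tm tb tcut v)"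
      unfolding P_def by (rule integral_sw)
    have eG2: "measure_pmf.expectation P (Gt tm tb tcut v) =
        measure_pmf.expectation P (\<lambda>\<omega>. exp (- v * (X L1 \<omega> - X L2 \<omega>)) * of_bool (AA L1 L2 \<omega>))
                + measure_pmf.expectation P (\<lambda>\<omega>. exp (- v * (X L1 \<omega> - X Lb \<omega>)) * of_bool (AA L1 Lb \<omega>))
                - measure_pmf.expectation P (\<lambda>\<omega>. exp (- v * (X L1 \<omega> - X L2 \<omega>)) * of_bool (AA L1 L2 \<omega> \<and> AA L1 Lb \<omega>))"
      unfolding Gt_eq using i1 i2 i3 by simp
    have pw: "f v = (\<lambda>\<omega>. Gt tm tb tcut v \<omega> + Gt tm tb tcut v (sw \<omega>)
        + exp (- v * (2 * X Lb \<omega> - X L1 \<omega> - X L2 \<omega>)) * of_bool (A Lb \<omega>)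
        - exp (- v * (X L1 \<omega> - X Lb \<omega>)) * of_bool (A L1 \<omega> \<and> A L2 \<omega>)
        - Ht tm tb tcut v \<omega> - Ht tm tb tcut v (sw \<omega>)
        + of_bool (A L1 \<omega> \<and> A L2 \<omega> \<and> A Lb \<omega>))"
      unfolding f_def[abs_def] X_def A_def by (simp only: pointwise)
    have U: "U1 pm pb tm tb tcut v = measure_pmf.expectation P (Gt tm tb tcut v)
        + measure_pmf.expectation P (\<lambda>\<omega>. Gt tm tb tcut v (sw \<omega>))
        + measure_pmf.expectation P (\<lambda>\<omega>. exp (- v * (2 * X Lb \<omega> - X L1 \<omega> - X L2 \<omega>)) * of_bool (A Lb \<omega>))
        - measure_pmf.expectation P (\<lambda>\<omega>. exp (- v * (X L1 \<omega> - X Lb \<omega>)) * of_bool (A L1 \<omega> \<and> A L2 \<omega>))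
        - measure_pmf.expectation P (Ht tm tb tcut v)
        - measure_pmf.expectation P (\<lambda>\<omega>. Ht tm tb tcut v (sw \<omega>))
        + measure_pmf.expectation P (\<lambda>\<omega>. of_bool (A L1 \<omega> \<and> A L2 \<omega> \<and> A Lb \<omega>))"
      unfolding U1f pw using iG iGs i4 i5 iH iHs i7 by simp
    show ?thesis using U[unfolded eG eH, unfolded eG2 Ht_eq] by simp
  qed
  have F': "F_e2e pm pb wm wb tcoh tm tb tmsg tcut = (1 + 3 * Ew_e2e pm pb wm wb tcoh tm tb tmsg tcut) / 4"
    unfolding F E using ppos by (simp add: field_simps)
  have E': "Ew_e2e pm pb wm wb tcoh tm tb tmsg tcut
           = wm ^ 2 * wb * exp (- k * real tmsg) / psucc pm pb tm tb tcut * U1 pm pb tm tb tcut k"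
    unfolding E C_def p_def by simp
  show ?thesis using F' E' part3 by blast
qed

end
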